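(* Let $n\le -1$ be an odd integer. Then $q_n$ has no monic quadratic factor $f\in\mathbb{Z}[w]$ with $f\equiv (w+1)^2\pmod 2$.
   Context: Define $q_n\in\mathbb{Z}[w]$ for odd $n\le -1$ by $q_{-1}=w^3-w^2+2w-7$, $q_{-3}=w^5-2w^4-2w^3+5w^2+3w-9$, $q_{-5}=w^7-2w^6-4w^5+8w^4+4w^3-7w^2+2w-7$, and $q_n=(w^2-1)(q_{n+2}-q_{n+4})+q_{n+6}$ for odd $n<-5$. *)

theory Defs
  imports "HOL-Computational_Algebra.Polynomial"
begin

(* qseq k = q_{-(2k+1)} *)
fun qseq :: "nat \<Rightarrow> int poly" where
  "qseq 0 = [:-7, 2, -1, 1:]"
| "qseq (Suc 0) = [:-9, 3, 5, -2, -2, 1:]"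
| "qseq (Suc (Suc 0)) = [:-7, 2, -7, 4, 8, -4, -2, 1:]"
| "qseq (Suc (Suc (Suc k))) =
     [:-1, 0, 1:] * (qseq (Suc (Suc k)) - qseq (Suc k)) + qseq k"

definition q :: "int \<Rightarrow> int poly" where
  "q n = qseq (nat ((- n - 1) div 2))"

end

theory Submission imports Defs begin

definition e :: "int \<Rightarrow> nat \<Rightarrow> int" where "e x k = poly (qseq k) x"

lemma e0: "e x 0 = x^3 - x^2 + 2*x - 7"
  by (simp add: e_def algebra_simps power2_eq_square power3_eq_cube)
lemma e1: "e x (Suc 0) = x^5 - 2*x^4 - 2*x^3 + 5*x^2 + 3*x - 9"
  by (simp add: e_def algebra_simps power2_eq_square power3_eq_cube eval_nat_numeral)
lemma e2: "e x (Suc (Suc 0)) = x^7 - 2*x^6 - 4*x^5 + 8*x^4 + 4*x^3 - 7*x^2 + 2*x - 7"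
  by (simp add: e_def algebra_simps power2_eq_square power3_eq_cube eval_nat_numeral)
lemma e_rec: "e x (Suc (Suc (Suc k))) = (x^2-1)*(e x (Suc (Suc k)) - e x (Suc k)) + e x k"
proof -
  have q3: "qseq (Suc(Suc(Suc k))) = [:-1,0,1:]*(qseq (Suc (Suc k)) - qseq (Suc k)) + qseq k" by simp
  have w: "poly [:-1,0,1::int:] x = x^2 - 1" by (simp add: power2_eq_square)
  show ?thesis unfolding e_def q3 poly_add poly_mult poly_diff w ..
qed

fun stp :: "int \<Rightarrow> int \<Rightarrow> int \<times> int \<times> int \<Rightarrow> int \<times> int \<times> int" where
  "stp x m (u,v,w) = (v, w, ((x^2-1)*(w-v)+u) mod m)"

fun T :: "int \<Rightarrow> int \<Rightarrow> nat \<Rightarrow> int \<times> int \<times> int" where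
  "T x m 0 = ((x^3 - x^2 + 2*x - 7) mod m, (x^5 - 2*x^4 - 2*x^3 + 5*x^2 + 3*x - 9) mod m,
     (x^7 - 2*x^6 - 4*x^5 + 8*x^4 + 4*x^3 - 7*x^2 + 2*x - 7) mod m)"
| "T x m (Suc k) = stp x m (T x m k)"

lemma hh: "(c*(a mod m - b mod m) + d) mod m = (c*(a-b)+d) mod (m::int)"
proof -
  have 1: "(a mod m - b mod m) mod m = (a - b) mod m" by (rule mod_diff_eq)
  have 2: "(c*(a mod m - b mod m)) mod m = (c*(a-b)) mod m"
    by (metis 1 mod_mult_right_eq)
  show ?thesis by (metis 2 mod_add_left_eq)
qed

lemma T_e: "T x m k = (e x k mod m, e x (Suc k) mod m, e x (Suc (Suc k)) mod m)"
proof (induction k)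
  case 0 show ?case by (simp only: T.simps e0 e1 e2)
next
  case (Suc k)
  have s3: "((x^2-1)*(e x (Suc (Suc k)) mod m - e x (Suc k) mod m) + e x k mod m) mod m
      = e x (Suc (Suc (Suc k))) mod m"
    by (simp only: e_rec hh mod_add_right_eq)
  show ?case by (simp only: T.simps Suc.IH stp.simps s3)
qed

lemma T_shift: "T x m L = T x m 0 \<Longrightarrow> T x m (j + L) = T x m j"
  by (induction j) auto

lemma T_mod: assumes "T x m L = T x m 0" shows "T x m (k mod L) = T x m k"
proof -
  have "T x m (i + L*q) = T x m i" for i q
  proof (induction q)
    case (Suc q)
    have "T x m (i + L * Suc q) = T x m ((i + L*q) + L)" by (simp add: algebra_simps)
    also have "\<dots> = T x m i" using T_shift[OF assms] Suc by simp
    finally show ?case .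
  qed simp
  from this[of "k mod L" "k div L"] show ?thesis by simp
qed

lemma e_mod: assumes "T x m L = T x m 0" shows "e x k mod m = fst (T x m (k mod L))"
  using T_mod[OF assms, of k] by (simp add: T_e)

lemma poly_dvd: "f dvd qseq k \<Longrightarrow> poly f x dvd e x k"
  unfolding e_def by (auto simp: dvd_def)

lemma wit:
  assumes "f dvd qseq k" "m dvd poly f x" "T x m L = T x m 0" "6 dvd L" "k mod 6 = r" "L > 0"
    "\<forall>j\<in>set [0..<L div 6]. fst (T x m (r + 6*j)) \<noteq> 0"
  shows False
proof -
  have "m dvd e x k" using assms(1,2) poly_dvd dvd_trans by blast
  hence z: "e x k mod m = 0" by simp
  define i where "i = k mod L"
  have iL: "i < L" using assms(6) by (simp add: i_def)
  have im: "i mod 6 = r" using assms(4,5) by (simp add: i_def mod_mod_cancel)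
  have "i = r + 6 * (i div 6)" using mod_mult_div_eq[of i 6] im by simp
  moreover have "i div 6 < L div 6" using iL assms(4) by (auto elim!: dvdE)
  ultimately have "fst (T x m i) \<noteq> 0" using assms(7) by (metis atLeastLessThan_iff le0 set_upt)
  moreover have "fst (T x m i) = 0" using e_mod[OF assms(3), of k] z unfolding i_def by argo
  ultimately show False by blast
qed

lemma c_0_1_1: assumes "[:1,0,1:] dvd qseq k" "k mod 6 = 1" shows False
proof -
  have h1: "(5::int) dvd poly ([:1,0,1:]::int poly) (-3)" by simp
  have h2: "T (-3) 5 6 = T (-3) 5 0" by code_simp
  have h3: "\<forall>j\<in>set [0..<6 div 6]. fst (T (-3) 5 (1 + 6*j)) \<noteq> 0" by code_simp
  show False by (rule wit[OF assms(1) h1 h2 _ assms(2) _ h3]) simp_all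
qed

lemma c_0_1_4: assumes "[:1,0,1:] dvd qseq k" "k mod 6 = 4" shows False
proof -
  have h1: "(5::int) dvd poly ([:1,0,1:]::int poly) (-3)" by simp
  have h2: "T (-3) 5 6 = T (-3) 5 0" by code_simp
  have h3: "\<forall>j\<in>set [0..<6 div 6]. fst (T (-3) 5 (4 + 6*j)) \<noteq> 0" by code_simp
  show False by (rule wit[OF assms(1) h1 h2 _ assms(2) _ h3]) simp_all
qed

lemma c_2_m1_1: assumes "[:-1,2,1:] dvd qseq k" "k mod 6 = 1" shows False
proof -
  have h1: "(7::int) dvd poly ([:-1,2,1:]::int poly) (-5)" by simp
  have h2: "T (-5) 7 6 = T (-5) 7 0" by code_simp
  have h3: "\<forall>j\<in>set [0..<6 div 6]. fst (T (-5) 7 (1 + 6*j)) \<noteq> 0" by code_simp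
  show False by (rule wit[OF assms(1) h1 h2 _ assms(2) _ h3]) simp_all
qed

lemma c_2_m1_4: assumes "[:-1,2,1:] dvd qseq k" "k mod 6 = 4" shows False
proof -
  have h1: "(7::int) dvd poly ([:-1,2,1:]::int poly) (-5)" by simp
  have h2: "T (-5) 7 6 = T (-5) 7 0" by code_simp
  have h3: "\<forall>j\<in>set [0..<6 div 6]. fst (T (-5) 7 (4 + 6*j)) \<noteq> 0" by code_simp
  show False by (rule wit[OF assms(1) h1 h2 _ assms(2) _ h3]) simp_all
qed

lemma c_m2_m1_1: assumes "[:-1,-2,1:] dvd qseq k" "k mod 6 = 1" shows False
proof -
  have h1: "(7::int) dvd poly ([:-1,-2,1:]::int poly) (-3)" by simp
  have h2: "T (-3) 7 12 = T (-3) 7 0" by code_simp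
  have h3: "\<forall>j\<in>set [0..<12 div 6]. fst (T (-3) 7 (1 + 6*j)) \<noteq> 0" by code_simp
  show False by (rule wit[OF assms(1) h1 h2 _ assms(2) _ h3]) simp_all
qed

lemma c_m2_m1_4: assumes "[:-1,-2,1:] dvd qseq k" "k mod 6 = 4" shows False
proof -
  have h1: "(17::int) dvd poly ([:-1,-2,1:]::int poly) (-5)" by simp
  have h2: "T (-5) 17 24 = T (-5) 17 0" by code_simp
  have h3: "\<forall>j\<in>set [0..<24 div 6]. fst (T (-5) 17 (4 + 6*j)) \<noteq> 0" by code_simp
  show False by (rule wit[OF assms(1) h1 h2 _ assms(2) _ h3]) simp_all
qed

lemma c_0_m3_1: assumes "[:-3,0,1:] dvd qseq k" "k mod 6 = 1" shows False
proof -
  have h1: "(11::int) dvd poly ([:-3,0,1:]::int poly) (-6)" by simp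
  have h2: "T (-6) 11 6 = T (-6) 11 0" by code_simp
  have h3: "\<forall>j\<in>set [0..<6 div 6]. fst (T (-6) 11 (1 + 6*j)) \<noteq> 0" by code_simp
  show False by (rule wit[OF assms(1) h1 h2 _ assms(2) _ h3]) simp_all
qed

lemma c_0_3_1: assumes "[:3,0,1:] dvd qseq k" "k mod 6 = 1" shows False
proof -
  have h1: "(7::int) dvd poly ([:3,0,1:]::int poly) (-5)" by simp
  have h2: "T (-5) 7 6 = T (-5) 7 0" by code_simp
  have h3: "\<forall>j\<in>set [0..<6 div 6]. fst (T (-5) 7 (1 + 6*j)) \<noteq> 0" by code_simp
  show False by (rule wit[OF assms(1) h1 h2 _ assms(2) _ h3]) simp_all
qed

lemma c_4_m1_1: assumes "[:-1,4,1:] dvd qseq k" "k mod 6 = 1" shows False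
proof -
  have h1: "(11::int) dvd poly ([:-1,4,1:]::int poly) (2)" by simp
  have h2: "T (2) 11 6 = T (2) 11 0" by code_simp
  have h3: "\<forall>j\<in>set [0..<6 div 6]. fst (T (2) 11 (1 + 6*j)) \<noteq> 0" by code_simp
  show False by (rule wit[OF assms(1) h1 h2 _ assms(2) _ h3]) simp_all
qed

lemma c_4_m1_4: assumes "[:-1,4,1:] dvd qseq k" "k mod 6 = 4" shows False
proof -
  have h1: "(11::int) dvd poly ([:-1,4,1:]::int poly) (2)" by simp
  have h2: "T (2) 11 6 = T (2) 11 0" by code_simp
  have h3: "\<forall>j\<in>set [0..<6 div 6]. fst (T (2) 11 (4 + 6*j)) \<noteq> 0" by code_simp
  show False by (rule wit[OF assms(1) h1 h2 _ assms(2) _ h3]) simp_all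
qed

lemma c_6_m3_1: assumes "[:-3,6,1:] dvd qseq k" "k mod 6 = 1" shows False
proof -
  have h1: "(13::int) dvd poly ([:-3,6,1:]::int poly) (2)" by simp
  have h2: "T (2) 13 6 = T (2) 13 0" by code_simp
  have h3: "\<forall>j\<in>set [0..<6 div 6]. fst (T (2) 13 (1 + 6*j)) \<noteq> 0" by code_simp
  show False by (rule wit[OF assms(1) h1 h2 _ assms(2) _ h3]) simp_all
qed

lemma c_m4_m1_1: assumes "[:-1,-4,1:] dvd qseq k" "k mod 6 = 1" shows False
proof -
  have h1: "(5::int) dvd poly ([:-1,-4,1:]::int poly) (-3)" by simp
  have h2: "T (-3) 5 6 = T (-3) 5 0" by code_simp
  have h3: "\<forall>j\<in>set [0..<6 div 6]. fst (T (-3) 5 (1 + 6*j)) \<noteq> 0" by code_simp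
  show False by (rule wit[OF assms(1) h1 h2 _ assms(2) _ h3]) simp_all
qed

lemma c_m4_m1_4: assumes "[:-1,-4,1:] dvd qseq k" "k mod 6 = 4" shows False
proof -
  have h1: "(5::int) dvd poly ([:-1,-4,1:]::int poly) (-3)" by simp
  have h2: "T (-3) 5 6 = T (-3) 5 0" by code_simp
  have h3: "\<forall>j\<in>set [0..<6 div 6]. fst (T (-3) 5 (4 + 6*j)) \<noteq> 0" by code_simp
  show False by (rule wit[OF assms(1) h1 h2 _ assms(2) _ h3]) simp_all
qed

lemma c_m6_1_1: assumes "[:1,-6,1:] dvd qseq k" "k mod 6 = 1" shows False
proof -
  have h1: "(7::int) dvd poly ([:1,-6,1:]::int poly) (-5)" by simp
  have h2: "T (-5) 7 6 = T (-5) 7 0" by code_simp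
  have h3: "\<forall>j\<in>set [0..<6 div 6]. fst (T (-5) 7 (1 + 6*j)) \<noteq> 0" by code_simp
  show False by (rule wit[OF assms(1) h1 h2 _ assms(2) _ h3]) simp_all
qed

lemma c_m6_1_4: assumes "[:1,-6,1:] dvd qseq k" "k mod 6 = 4" shows False
proof -
  have h1: "(7::int) dvd poly ([:1,-6,1:]::int poly) (-5)" by simp
  have h2: "T (-5) 7 6 = T (-5) 7 0" by code_simp
  have h3: "\<forall>j\<in>set [0..<6 div 6]. fst (T (-5) 7 (4 + 6*j)) \<noteq> 0" by code_simp
  show False by (rule wit[OF assms(1) h1 h2 _ assms(2) _ h3]) simp_all
qed

lemma enum1:
  fixes a b :: int
  assumes "even a" "odd b" "(1+a+b) dvd -4" "(1-a+b) dvd -8" "b dvd -9"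
  shows "(a,b) \<in> {(0,1), (2,-1), (-2,-1), (0,-3), (0,3), (4,-1), (6,-3), (-4,-1), (-6,1)}"
proof -
  have "\<bar>1+a+b\<bar> \<le> 4" using dvd_imp_le_int[OF _ assms(3)] by simp
  moreover have "\<bar>1-a+b\<bar> \<le> 8" using dvd_imp_le_int[OF _ assms(4)] by simp
  ultimately have bd: "-6 \<le> a \<and> a \<le> 6 \<and> -7 \<le> b \<and> b \<le> 5" by linarith
  have "b = -7 \<or> b = -5 \<or> b = -3 \<or> b = -1 \<or> b = 1 \<or> b = 3 \<or> b = 5" using bd assms(2) by presburger
  hence hb: "b \<in> {-3,-1,1,3}" using assms(5) by (elim disjE) simp_all
  have ha: "a = -6 \<or> a = -4 \<or> a = -2 \<or> a = 0 \<or> a = 2 \<or> a = 4 \<or> a = 6" using bd assms(1) by presburger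
  from ha show ?thesis using hb assms(3,4) by (elim disjE) (simp_all, (elim disjE; simp)+)
qed

lemma enum4:
  fixes a b :: int
  assumes "even a" "odd b" "(1+a+b) dvd -4" "(1-a+b) dvd -8" "b dvd -7"
  shows "(a,b) \<in> {(0,1), (2,-1), (-2,-1), (4,-1), (-4,-1), (-6,1), (2,-7)}"
proof -
  have "\<bar>1+a+b\<bar> \<le> 4" using dvd_imp_le_int[OF _ assms(3)] by simp
  moreover have "\<bar>1-a+b\<bar> \<le> 8" using dvd_imp_le_int[OF _ assms(4)] by simp
  ultimately have bd: "-6 \<le> a \<and> a \<le> 6 \<and> -7 \<le> b \<and> b \<le> 5" by linarith
  have "b = -7 \<or> b = -5 \<or> b = -3 \<or> b = -1 \<or> b = 1 \<or> b = 3 \<or> b = 5" using bd assms(2) by presburger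
  hence hb: "b \<in> {-7,-1,1}" using assms(5) by (elim disjE) simp_all
  have ha: "a = -6 \<or> a = -4 \<or> a = -2 \<or> a = 0 \<or> a = 2 \<or> a = 4 \<or> a = 6" using bd assms(1) by presburger
  from ha show ?thesis using hb assms(3,4) by (elim disjE) (simp_all, (elim disjE; simp)+)
qed

lemma mpm: "map_poly (of_int::int\<Rightarrow>real) (p1*p2) = map_poly of_int p1 * map_poly of_int p2"
  by (intro poly_eqI) (simp add: coeff_map_poly coeff_mult of_int_sum)
lemma mpa: "map_poly (of_int::int\<Rightarrow>real) (p1+p2) = map_poly of_int p1 + map_poly of_int p2"
  by (intro poly_eqI) (simp add: coeff_map_poly)
lemma mpd: "map_poly (of_int::int\<Rightarrow>real) (p1-p2) = map_poly of_int p1 - map_poly of_int p2"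
  by (intro poly_eqI) (simp add: coeff_map_poly)

definition th :: real where "th = -1 - 2*sqrt 2"
lemma th2: "th^2 = 7 - 2*th"
  by (simp add: th_def power2_eq_square algebra_simps)
lemma thf: "th^2 + 2*th - 7 = 0" using th2 by simp

definition rs :: "nat \<Rightarrow> real" where "rs k = poly (map_poly of_int (qseq k)) th"

lemma rs_rec: "rs (Suc(Suc(Suc k))) = (th^2-1)*(rs (Suc (Suc k)) - rs (Suc k)) + rs k"
  by (simp add: rs_def mpm mpa mpd map_poly_pCons algebra_simps power2_eq_square)

lemma rs0: "rs 0 = -43 - 30 * sqrt 2"
proof -
  have "rs 0 = (th^2+2*th-7)*(th-3) + (-28+15*th)"
    by (simp add: rs_def map_poly_pCons algebra_simps power2_eq_square power3_eq_cube)
  also have "\<dots> = -28+15*th" by (simp only: thf mult_zero_left add_0_left)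
  finally show ?thesis by (simp add: th_def algebra_simps)
qed
lemma rs1: "rs (Suc 0) = -544 - 384 * sqrt 2"
proof -
  have "rs (Suc 0) = (th^2+2*th-7)*(th^3-4*th^2+13*th-49) + (-352+192*th)"
    by (simp add: rs_def map_poly_pCons algebra_simps power2_eq_square power3_eq_cube eval_nat_numeral)
  also have "\<dots> = -352+192*th" by (simp only: thf mult_zero_left add_0_left)
  finally show ?thesis by (simp add: th_def algebra_simps)
qed
lemma rs2: "rs (Suc (Suc 0)) = -6843 - 4838 * sqrt 2"
proof -
  have "rs (Suc (Suc 0)) = (th^2+2*th-7)*(th^5-4*th^4+11*th^3-42*th^2+165*th-631) + (-4424+2419*th)"
    by (simp add: rs_def map_poly_pCons algebra_simps power2_eq_square power3_eq_cube eval_nat_numeral)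
  also have "\<dots> = -4424+2419*th" by (simp only: thf mult_zero_left add_0_left)
  finally show ?thesis by (simp add: th_def algebra_simps)
qed

lemma rs_inv: "rs k < 0 \<and> rs (Suc k) \<le> 2*rs k \<and> rs (Suc (Suc k)) \<le> 2*rs (Suc k)"
proof (induction k)
  case 0
  have s: "sqrt 2 \<ge> 0" by simp
  have "- 43 - 30 * sqrt 2 < 0" using s by smt
  moreover have "- 544 - 384 * sqrt 2 \<le> 2 * (- 43 - 30 * sqrt 2)" using s by smt
  moreover have "- 6843 - 4838 * sqrt 2 \<le> 2 * (- 544 - 384 * sqrt 2)" using s by smt
  ultimately show ?case unfolding rs0 rs1 rs2 by blast
next
  case (Suc k)
  define x0 where "x0 = rs k"
  define x1 where "x1 = rs (Suc k)"
  define x2 where "x2 = rs (Suc (Suc k))"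
  have L: "th^2 - 1 \<ge> 4" using th2 by (simp add: th_def)
  have h: "x0 < 0" "x1 \<le> 2*x0" "x2 \<le> 2*x1" using Suc by (auto simp: x0_def x1_def x2_def)
  have d: "x2 - x1 \<le> 0" using h by smt
  have "(th^2-1)*(x2-x1) \<le> 4*(x2-x1)" using mult_right_mono_neg[OF L d] by simp
  hence "rs (Suc (Suc (Suc k))) \<le> 2 * x2"
    unfolding rs_rec x0_def[symmetric] x1_def[symmetric] x2_def[symmetric] using h by smt
  moreover have "x1 < 0" using h by smt
  ultimately show ?case using h by (simp add: x1_def x2_def)
qed

lemma no27: "[:-7,2,1:] dvd qseq k \<Longrightarrow> False"
proof -
  assume "[:-7,2,1:] dvd qseq k"
  then obtain h where hq: "qseq k = [:-7,2,1:] * h" by (auto simp: dvd_def)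
  have "rs k = poly (map_poly of_int ([:-7,2,1:] * h)) th" by (simp only: rs_def hq)
  also have "\<dots> = poly (map_poly of_int [:-7,2,1:]) th * poly (map_poly of_int h) th"
    by (simp only: mpm poly_mult)
  also have "poly (map_poly of_int [:-7::int,2,1:]) th = th^2 + 2*th - 7"
    by (simp add: map_poly_pCons algebra_simps power2_eq_square)
  finally have "rs k = 0" by (simp add: thf)
  with rs_inv[of k] show False by simp
qed

lemma deg2: assumes "degree (f::int poly) = 2" "lead_coeff f = 1"
  shows "f = [:coeff f 0, coeff f 1, 1:]"
proof (rule poly_eqI)
  fix i
  show "coeff f i = coeff [:coeff f 0, coeff f 1, 1:] i"
    using assms by (cases i; cases "i - 1"; cases "i - 2") (auto simp: coeff_pCons coeff_eq_0 numeral_2_eq_2)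
qed

lemma vals:
  "T 1 0 6 = T 1 0 0" "T (-1) 0 6 = T (-1) 0 0" "T 0 0 6 = T 0 0 0" "T 1 2 6 = T 1 2 0"
  "fst (T 1 0 1) = -4" "fst (T 1 0 4) = -4" "fst (T (-1) 0 1) = -8" "fst (T (-1) 0 4) = -8"
  "fst (T 0 0 1) = -9" "fst (T 0 0 4) = -7"
  "\<forall>j\<in>set [0..<1]. fst (T 1 2 (0 + 6*j)) \<noteq> 0"
  "\<forall>j\<in>set [0..<1]. fst (T 1 2 (2 + 6*j)) \<noteq> 0"
  "\<forall>j\<in>set [0..<1]. fst (T 1 2 (3 + 6*j)) \<noteq> 0"
  "\<forall>j\<in>set [0..<1]. fst (T 1 2 (5 + 6*j)) \<noteq> 0"
  by code_simp+

lemma exact: "T x 0 6 = T x 0 0 \<Longrightarrow> e x k = fst (T x 0 (k mod 6))"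
  using e_mod[of x 0 6 k] by simp

lemma codd: assumes hd: "[:b,a,1:] dvd qseq k" and "even a" "odd b" "k mod 6 = r" "r \<in> {0,2,3,5}"
  shows False
proof -
  have h1: "(2::int) dvd poly [:b,a,1:] 1" using assms(2,3) by simp
  have h2: "T 1 2 6 = T 1 2 0" by code_simp
  have v: "fst (T 1 2 0) \<noteq> 0 \<and> fst (T 1 2 2) \<noteq> 0 \<and> fst (T 1 2 3) \<noteq> 0 \<and> fst (T 1 2 5) \<noteq> 0"
    by code_simp
  have h3: "\<forall>j\<in>set [0..<6 div 6]. fst (T 1 2 (r + 6*j)) \<noteq> 0" using assms(5) v by auto
  show False by (rule wit[OF hd h1 h2 _ assms(4) _ h3]) simp_all
qed

lemma main_k:
  fixes a b :: int
  assumes hd: "[:b,a,1:] dvd qseq k" and ea: "even a" and ob: "odd b"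
  shows False
proof -
  have "k mod 6 < 6" by simp
  hence "k mod 6 \<in> {0,2,3,5} \<or> k mod 6 = 1 \<or> k mod 6 = 4" by auto
  moreover have pd: "poly [:b,a,1:] 1 dvd e 1 k" "poly [:b,a,1:] (-1) dvd e (-1) k" "poly [:b,a,1:] 0 dvd e 0 k"
    by (rule poly_dvd[OF hd])+
  moreover have ex: "e 1 k = fst (T 1 0 (k mod 6))" "e (-1) k = fst (T (-1) 0 (k mod 6))" "e 0 k = fst (T 0 0 (k mod 6))"
    using exact[OF vals(1)] exact[OF vals(2)] exact[OF vals(3)] by auto
  ultimately consider "k mod 6 \<in> {0,2,3,5}" | (r1) "k mod 6 = 1" | (r4) "k mod 6 = 4" by blast
  thus False
  proof cases
    case 1 show False by (rule codd[OF hd ea ob refl 1])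
  next
    case r1
    have "e 1 k = -4" "e (-1) k = -8" "e 0 k = -9" using ex r1 vals(5,7,9) by simp_all
    with pd have "(1+a+b) dvd -4" "(1-a+b) dvd -8" "b dvd -9" by (simp_all add: algebra_simps)
    hence "(a,b) \<in> {(0,1), (2,-1), (-2,-1), (0,-3), (0,3), (4,-1), (6,-3), (-4,-1), (-6,1)}" by (rule enum1[OF ea ob])
    then consider "a = 0" "b = 1" | "a = 2" "b = -1" | "a = -2" "b = -1" | "a = 0" "b = -3" | "a = 0" "b = 3" | "a = 4" "b = -1" | "a = 6" "b = -3" | "a = -4" "b = -1" | "a = -6" "b = 1" by auto
    thus False
    proof cases
      case 1 thus ?thesis using hd r1 c_0_1_1[of k] by simp
    next
      case 2 thus ?thesis using hd r1 c_2_m1_1[of k] by simp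
    next
      case 3 thus ?thesis using hd r1 c_m2_m1_1[of k] by simp
    next
      case 4 thus ?thesis using hd r1 c_0_m3_1[of k] by simp
    next
      case 5 thus ?thesis using hd r1 c_0_3_1[of k] by simp
    next
      case 6 thus ?thesis using hd r1 c_4_m1_1[of k] by simp
    next
      case 7 thus ?thesis using hd r1 c_6_m3_1[of k] by simp
    next
      case 8 thus ?thesis using hd r1 c_m4_m1_1[of k] by simp
    next
      case 9 thus ?thesis using hd r1 c_m6_1_1[of k] by simp
    qed
  next
    case r4
    have "e 1 k = -4" "e (-1) k = -8" "e 0 k = -7" using ex r4 vals(6,8,10) by simp_all
    with pd have "(1+a+b) dvd -4" "(1-a+b) dvd -8" "b dvd -7" by (simp_all add: algebra_simps)
    hence "(a,b) \<in> {(0,1), (2,-1), (-2,-1), (4,-1), (-4,-1), (-6,1), (2,-7)}" by (rule enum4[OF ea ob])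
    then consider "a = 0" "b = 1" | "a = 2" "b = -1" | "a = -2" "b = -1" | "a = 4" "b = -1" | "a = -4" "b = -1" | "a = -6" "b = 1" | "a = 2" "b = -7" by auto
    thus False
    proof cases
      case 1 thus ?thesis using hd r4 c_0_1_4[of k] by simp
    next
      case 2 thus ?thesis using hd r4 c_2_m1_4[of k] by simp
    next
      case 3 thus ?thesis using hd r4 c_m2_m1_4[of k] by simp
    next
      case 4 thus ?thesis using hd r4 c_4_m1_4[of k] by simp
    next
      case 5 thus ?thesis using hd r4 c_m4_m1_4[of k] by simp
    next
      case 6 thus ?thesis using hd r4 c_m6_1_4[of k] by simp
    next
      case 7 thus ?thesis using hd r4 no27[of k] by simp
    qed
  qed
qed

theorem lemma4p4:
  fixes n :: int
  assumes "odd n" and "n \<le> -1"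
  shows "\<not> (\<exists>f :: int poly. degree f = 2 \<and> lead_coeff f = 1 \<and> f dvd q n \<and>
            (\<forall>i. 2 dvd coeff (f - [:1, 1:] ^ 2) i))"
proof
  assume "\<exists>f :: int poly. degree f = 2 \<and> lead_coeff f = 1 \<and> f dvd q n \<and>
            (\<forall>i. 2 dvd coeff (f - [:1, 1:] ^ 2) i)"
  then obtain f :: "int poly" where f: "degree f = 2" "lead_coeff f = 1" "f dvd q n"
    "\<forall>i. 2 dvd coeff (f - [:1, 1:] ^ 2) i" by blast
  define a where "a = coeff f 1"
  define b where "b = coeff f 0"
  have fe: "f = [:b,a,1:]" using deg2[OF f(1,2)] by (simp add: a_def b_def)
  have sq: "[:1,1:]^2 = [:1,2,1::int:]" by (simp add: power2_eq_square)
  have "2 dvd coeff (f - [:1, 1:] ^ 2) 0" "2 dvd coeff (f - [:1, 1:] ^ 2) 1" using f(4) by auto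
  hence "2 dvd b - 1" "2 dvd a - 2" unfolding sq fe by simp_all
  hence ea: "even a" and ob: "odd b" by presburger+
  have "[:b,a,1:] dvd qseq (nat ((- n - 1) div 2))" using f(3) fe by (simp add: q_def)
  from main_k[OF this ea ob] show False .
qed

end
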